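(* Let $0<\alpha\le\frac12$, $0<s_{\min}<s_{\max}\le1$ and $p_{\max}\in(0,1)$, and define $\mu_0,\lambda_k,k_{\min},k_{\max}$ as in the context. Assume the parameters are such that every value handed to an Any-Fit routine by RPAP is at most $1$ (i.e. $p_{\max}s_{\min}\le\mu_0$ and $\ln\frac{1}{1-p_{\max}}\le\lambda_{k_{\min}}$). Let $X_1,\dots,X_n$ be independent items with $X_i\sim\operatorname{Ber}(p_i,s_i)$, $p_i\in(0,1]$, $0<s_i\le s_{\max}$. If RPAP packs them into $M$ bins and an optimal viable packing uses $OPT$ bins, then $$M\le C\cdot OPT+k_{\max}-k_{\min}+3,\qquad C=\frac{1+\alpha}{(1-\alpha)\mu_{\min}},$$ where $\mu_{\min}=\frac12\min\big(p_{\max},\,\mu_0,\,(1-p_{\max})\lambda_{\min}\big)$ and $\lambda_{\min}=\dfrac{1}{\lfloor 1/s_{\max}\rfloor+1}\,Q^{-1}\!\left(\lfloor 1/s_{\max}\rfloor+1,\,1-\alpha\right)$.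
   Context: $X\sim\operatorname{Ber}(p,s)$ means $X=s$ with probability $p$ and $0$ otherwise. Bins have capacity $1$; an assignment of independent items to bins is viable if for every bin the sum $B$ of its items satisfies $\mathbb{P}(B>1)\le\alpha$; $OPT$ is the minimum number of bins in a viable assignment. For integer $k\ge1$, $Q(k,\lambda)=\mathbb{P}(\operatorname{Poi}(\lambda)\le k-1)$, and for $\beta\in(0,1)$, $Q^{-1}(k,\beta)$ is the unique $\lambda>0$ with $Q(k,\lambda)=\beta$. An Any-Fit routine packs real values in $[0,1]$ one by one into bins of capacity 1, keeping each bin's total at most 1 and opening a new bin only if the current value fits into no open bin of that routine. Algorithm RPAP: set $k_{\min}=\lfloor1/s_{\max}\rfloor$, $k_{\max}=\lceil1/s_{\min}\rceil-1$, $\lambda_k=Q^{-1}(k+1,1-\alpha)$ for $k_{\min}\le k\le k_{\max}$, and $\mu_0=\frac{2\alpha+s_{\min}-\sqrt{s_{\min}^2+4\alpha s_{\min}}}{2\alpha}$. It maintains separate Any-Fit routines (disjoint sets of bins): one for "confident" items, one for "minor" items, and one for each $k\in\{k_{\min},\dots,k_{\max}\}$. Items are processed online in order: if $p_i>p_{\max}$ the item is packed by the confident routine with value $s_i$; else if $s_i\le s_{\min}$ it is packed by the minor routine with value $p_is_i/\mu_0$; otherwise, with $k=\lfloor1/s_i\rfloor$, it is packed by routine $k$ with value $\ln\!\big(\frac{1}{1-p_i}\big)/\lambda_k$. $M$ is the total number of bins over all routines. *)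

theory Defs
  imports "HOL-Probability.Probability"
begin

(* An item Ber(p,s) is represented by the pair (p,s). *)
definition item_pmf :: "real \<times> real \<Rightarrow> real pmf" where
  "item_pmf ps = map_pmf (\<lambda>b. if b then snd ps else 0) (bernoulli_pmf (fst ps))"

fun sum_pmf :: "(real \<times> real) list \<Rightarrow> real pmf" where
  "sum_pmf [] = return_pmf 0"
| "sum_pmf (x # xs) = map_pmf (\<lambda>(a, r). a + r) (pair_pmf (item_pmf x) (sum_pmf xs))"

definition bin_items :: "(real \<times> real) list \<Rightarrow> (nat \<Rightarrow> nat) \<Rightarrow> nat \<Rightarrow> (real \<times> real) list" where
  "bin_items items f b = map (\<lambda>i. items ! i) (filter (\<lambda>i. f i = b) [0..<length items])"

definition viable :: "real \<Rightarrow> (real \<times> real) list \<Rightarrow> (nat \<Rightarrow> nat) \<Rightarrow> bool" where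
  "viable \<alpha> items f \<longleftrightarrow>
     (\<forall>b. measure_pmf.prob (sum_pmf (bin_items items f b)) {x. x > 1} \<le> \<alpha>)"

definition num_bins :: "nat \<Rightarrow> (nat \<Rightarrow> nat) \<Rightarrow> nat" where
  "num_bins n f = card (f ` {..<n})"

definition OPT :: "real \<Rightarrow> (real \<times> real) list \<Rightarrow> nat" where
  "OPT \<alpha> items = (LEAST m. \<exists>f. viable \<alpha> items f \<and> num_bins (length items) f = m)"

definition Q :: "nat \<Rightarrow> real \<Rightarrow> real" where
  "Q k lam0 = measure_pmf.prob (poisson_pmf lam0) {..k - 1}"

definition Qinv :: "nat \<Rightarrow> real \<Rightarrow> real" where
  "Qinv k \<beta> = (THE l. l > 0 \<and> Q k l = \<beta>)"

(* Any-Fit packing of the value list vs: item j goes to bin g j; bins are numbered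
   0,1,2,... in order of opening. *)
definition load :: "real list \<Rightarrow> (nat \<Rightarrow> nat) \<Rightarrow> nat \<Rightarrow> nat \<Rightarrow> real" where
  "load vs g j b = (\<Sum>i\<in>{i. i < j \<and> g i = b}. vs ! i)"

definition anyfit :: "real list \<Rightarrow> (nat \<Rightarrow> nat) \<Rightarrow> bool" where
  "anyfit vs g \<longleftrightarrow>
     (\<forall>j < length vs.
        g j \<le> card (g ` {..<j})
      \<and> load vs g j (g j) + vs ! j \<le> 1
      \<and> (g j = card (g ` {..<j}) \<longrightarrow>
           (\<forall>b < card (g ` {..<j}). load vs g j b + vs ! j > 1)))"

datatype rclass = Confident | Minor | Regular nat

definition mu0 :: "real \<Rightarrow> real \<Rightarrow> real" where
  "mu0 \<alpha> smin = (2 * \<alpha> + smin - sqrt (smin ^ 2 + 4 * \<alpha> * smin)) / (2 * \<alpha>)"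

definition kmin :: "real \<Rightarrow> nat" where
  "kmin smax = nat \<lfloor>1 / smax\<rfloor>"

definition kmax :: "real \<Rightarrow> nat" where
  "kmax smin = nat (\<lceil>1 / smin\<rceil> - 1)"

definition lam :: "real \<Rightarrow> nat \<Rightarrow> real" where
  "lam \<alpha> k = Qinv (k + 1) (1 - \<alpha>)"

definition rclass_of :: "real \<Rightarrow> real \<Rightarrow> real \<times> real \<Rightarrow> rclass" where
  "rclass_of pmax smin x =
     (if fst x > pmax then Confident
      else if snd x \<le> smin then Minor
      else Regular (nat \<lfloor>1 / snd x\<rfloor>))"

definition rvalue :: "real \<Rightarrow> real \<Rightarrow> real \<Rightarrow> real \<times> real \<Rightarrow> real" where
  "rvalue \<alpha> pmax smin x =
     (case rclass_of pmax smin x of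
        Confident \<Rightarrow> snd x
      | Minor \<Rightarrow> fst x * snd x / mu0 \<alpha> smin
      | Regular k \<Rightarrow> ln (1 / (1 - fst x)) / lam \<alpha> k)"

definition routine_input :: "real \<Rightarrow> real \<Rightarrow> real \<Rightarrow> (real \<times> real) list \<Rightarrow> rclass \<Rightarrow> real list" where
  "routine_input \<alpha> pmax smin items c =
     map (rvalue \<alpha> pmax smin) (filter (\<lambda>x. rclass_of pmax smin x = c) items)"

definition rclasses :: "real \<Rightarrow> real \<Rightarrow> rclass set" where
  "rclasses smin smax = {Confident, Minor} \<union> Regular ` {kmin smax..kmax smin}"

definition rpap_bins :: "real \<Rightarrow> real \<Rightarrow> real \<Rightarrow> real \<Rightarrow> (real \<times> real) list
                          \<Rightarrow> (rclass \<Rightarrow> nat \<Rightarrow> nat) \<Rightarrow> nat" where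
  "rpap_bins \<alpha> pmax smin smax items G =
     (\<Sum>c\<in>rclasses smin smax. num_bins (length (routine_input \<alpha> pmax smin items c)) (G c))"

definition rpap_run :: "real \<Rightarrow> real \<Rightarrow> real \<Rightarrow> real \<Rightarrow> (real \<times> real) list
                          \<Rightarrow> (rclass \<Rightarrow> nat \<Rightarrow> nat) \<Rightarrow> bool" where
  "rpap_run \<alpha> pmax smin smax items G \<longleftrightarrow>
     (\<forall>c\<in>rclasses smin smax. anyfit (routine_input \<alpha> pmax smin items c) (G c))"

end

theory Submission
  imports Defs
begin


definition PP :: "nat \<Rightarrow> real \<Rightarrow> real" where
  "PP n x = (\<Sum>i<n. exp (-x) * x ^ i / fact i)"
definition pp :: "nat \<Rightarrow> real \<Rightarrow> real" where
  "pp m x = exp (-x) * x ^ m / fact m"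

lemma PP_Suc: "PP (Suc n) x = PP n x + pp n x"
  by (simp add: PP_def pp_def)

lemma PP_0: "PP 0 x = 0" by (simp add: PP_def)

lemma pp_nonneg: "x \<ge> 0 \<Longrightarrow> pp m x \<ge> 0" by (simp add: pp_def)
lemma pp_pos: "x > 0 \<Longrightarrow> pp m x > 0" by (simp add: pp_def)

lemma DERIV_PP: "DERIV (PP (Suc m)) x :> - pp m x"
proof (induction m)
  case 0
  have "PP (Suc 0) = (\<lambda>x. exp (-x))" by (auto simp: PP_def)
  then show ?case by (auto simp: pp_def intro!: derivative_eq_intros)
next
  case (Suc m)
  have e: "PP (Suc (Suc m)) = (\<lambda>x. PP (Suc m) x + exp (-x) * x ^ Suc m / fact (Suc m))"
    by (rule ext) (simp add: PP_Suc[of "Suc m"] pp_def)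
  have d: "DERIV (\<lambda>x. exp (-x) * x ^ Suc m / fact (Suc m)) x :>
      (- exp (-x) * x ^ Suc m + exp (-x) * (real (Suc m) * x ^ m)) / fact (Suc m)"
  proof -
    have p: "DERIV (\<lambda>x. x ^ Suc m) x :> real (Suc m) * x ^ m" using DERIV_pow[of "Suc m" x] by simp
    have q: "DERIV (\<lambda>x. exp (-x)) x :> - exp (-x)" by (auto intro!: derivative_eq_intros)
    show ?thesis using DERIV_cdivide[OF DERIV_mult[OF q p], of "fact (Suc m)"] by (simp add: algebra_simps)
  qed
  have f: "fact (Suc m) = real (Suc m) * fact m" by simp
  have "(- exp (-x) * x ^ Suc m + exp (-x) * (real (Suc m) * x ^ m)) / fact (Suc m)
     = - pp (Suc m) x + pp m x"
    unfolding pp_def f by (simp add: field_simps del: of_nat_Suc)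
  then have "- pp m x + (- exp (-x) * x ^ Suc m + exp (-x) * (real (Suc m) * x ^ m)) / fact (Suc m)
        = - pp (Suc m) x" by simp
  then show ?case unfolding e using DERIV_add[OF Suc d] by simp
qed

lemma PP_cont: "isCont (PP n) x"
proof (cases n)
  case 0 then have "PP n = (\<lambda>x. 0)" by (auto simp: PP_def)
  then show ?thesis by simp
next
  case (Suc m) then show ?thesis using DERIV_PP DERIV_isCont by blast
qed

lemma PP_at0: "n \<ge> 1 \<Longrightarrow> PP n 0 = 1"
proof (induction n)
  case 0 then show ?case by simp
next
  case (Suc n) then show ?case
    by (cases "n = 0") (auto simp: PP_Suc PP_0 pp_def)
qed

lemma PP_strict_decr:
  assumes "n \<ge> 1" "0 \<le> a" "a < b"
  shows "PP n b < PP n a"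
proof -
  obtain m where n: "n = Suc m" using assms(1) by (cases n) auto
  show ?thesis unfolding n
    apply (rule DERIV_neg_imp_decreasing_open[OF assms(3)])
    subgoal for x using DERIV_PP[of m x] pp_pos[of x m] assms by (intro exI[of _ "- pp m x"]) auto
    using PP_cont by (intro continuous_at_imp_continuous_on) auto
qed

lemma PP_mono:
  assumes "n \<ge> 1" "0 \<le> a" "a \<le> b"
  shows "PP n b \<le> PP n a"
  using PP_strict_decr[OF assms(1,2), of b] assms(3) by (cases "a = b") auto

lemma aux_tend: "((\<lambda>x::real. x ^ i / exp x / fact i) \<longlongrightarrow> 0 / (fact i :: real)) at_top"
  by (rule tendsto_divide[OF tendsto_power_div_exp_0 tendsto_const]) simp

lemma PP_tendsto0: "(PP n \<longlongrightarrow> 0) at_top"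
proof -
  have "((\<lambda>x::real. \<Sum>i<n. (x ^ i / exp x) / fact i) \<longlongrightarrow> (\<Sum>i<n. 0 / fact i)) at_top"
    by (rule tendsto_sum, rule aux_tend)
  moreover have "PP n = (\<lambda>x. \<Sum>i<n. (x ^ i / exp x) / fact i)"
    by (auto simp: PP_def exp_minus field_simps intro!: sum.cong)
  ultimately show ?thesis by simp
qed

lemma Q_PP: "n \<ge> 1 \<Longrightarrow> 0 < x \<Longrightarrow> Q n x = PP n x"
proof -
  assume n: "n \<ge> 1" and x: "0 < x"
  have "{..n - 1} = {..<n}" using n by auto
  then show ?thesis
    unfolding Q_def PP_def
    using x by (simp add: measure_measure_pmf_finite mult.commute mult.left_commute)
qed

lemma PP_le1: "n \<ge> 1 \<Longrightarrow> 0 \<le> x \<Longrightarrow> PP n x \<le> 1"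
  using Q_PP[of n x] measure_pmf.prob_le_1[of "poisson_pmf x" "{..n-1}"] PP_at0[of n] unfolding Q_def
  by (cases "x = 0") auto

lemma Qinv_prop:
  assumes n: "n \<ge> 1" and b: "0 < \<beta>" "\<beta> < 1"
  shows "Qinv n \<beta> > 0 \<and> PP n (Qinv n \<beta>) = \<beta>"
proof -
  have "\<forall>\<^sub>F x in at_top. PP n x < \<beta>"
    using order_tendstoD(2)[OF PP_tendsto0 b(1)] .
  then obtain X where X: "\<And>x. x \<ge> X \<Longrightarrow> PP n x < \<beta>" by (auto simp: eventually_at_top_linorder)
  define Y where "Y = max X 1"
  have "PP n Y < \<beta>" using X by (simp add: Y_def)
  moreover have "Y \<ge> 0" by (simp add: Y_def)
  ultimately obtain l where l: "0 \<le> l" "l \<le> Y" "PP n l = \<beta>"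
    using IVT2[of "PP n" Y \<beta> 0] PP_at0[OF n] PP_cont b by force
  have l0: "l > 0" using l PP_at0[OF n] b by (cases "l = 0") auto
  have ex: "\<exists>!l. l > 0 \<and> Q n l = \<beta>"
  proof (rule ex1I[of _ l])
    show "0 < l \<and> Q n l = \<beta>" using l l0 Q_PP[OF n] by auto
  next
    fix l' assume "0 < l' \<and> Q n l' = \<beta>"
    then have l': "0 < l'" "PP n l' = \<beta>" using Q_PP[OF n] by auto
    show "l' = l"
    proof (rule ccontr)
      assume "l' \<noteq> l"
      then consider "l' < l" | "l < l'" by linarith
      then show False
        using PP_strict_decr[OF n, of l' l] PP_strict_decr[OF n, of l l'] l l0 l' by cases auto
    qed
  qed
  have "Qinv n \<beta> > 0 \<and> Q n (Qinv n \<beta>) = \<beta>"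
    unfolding Qinv_def by (rule theI'[OF ex])
  then show ?thesis using Q_PP[OF n] by auto
qed



lemma DERIV_PP_comp:
  assumes "DERIV g x :> g'"
  shows "DERIV (\<lambda>x. PP (Suc m) (g x)) x :> - pp m (g x) * g'"
  using DERIV_chain2[OF DERIV_PP assms] by simp

lemma key_u2: assumes "u \<ge> (1::real)" shows "u\<^sup>2 \<le> exp (u - 1 / u)"
proof -
  have "(\<lambda>u. u - 1/u - 2 * ln u) 1 \<le> (\<lambda>u. u - 1/u - 2 * ln u) u"
  proof (rule DERIV_nonneg_imp_nondecreasing[OF assms])
    fix x :: real assume x: "1 \<le> x" "x \<le> u"
    have "DERIV (\<lambda>u. u - 1/u - 2 * ln u) x :> 1 + 1/x\<^sup>2 - 2/x"
      using x by (auto intro!: derivative_eq_intros simp: power2_eq_square field_simps)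
    moreover have "1 + 1/x\<^sup>2 - 2/x = (1 - 1/x)\<^sup>2"
      using x by (simp add: power2_eq_square field_simps)
    ultimately show "\<exists>y. DERIV (\<lambda>u. u - 1/u - 2 * ln u) x :> y \<and> y \<ge> 0" by auto
  qed
  then have "2 * ln u \<le> u - 1/u" by simp
  then have "exp (2 * ln u) \<le> exp (u - 1/u)" by simp
  moreover have "exp (2 * ln u) = u\<^sup>2" using assms
    by (simp add: exp_of_nat_mult[of 2, simplified] power2_eq_square[symmetric])
  ultimately show ?thesis by simp
qed

lemma key_pp:
  assumes u: "u \<ge> (1::real)"
  shows "pp m (real (Suc m) * u) \<le> pp m (real (Suc m) / u) / u\<^sup>2"
proof -
  define N where "N = real (Suc m)"
  have N: "N > 0" by (simp add: N_def)
  have u0: "u > 0" using u by simp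
  have "u ^ (2 * m + 2) = (u\<^sup>2) ^ Suc m"
    using power_mult[of u 2 "Suc m"] by (simp add: mult_2_right)
  also have "\<dots> \<le> exp (u - 1/u) ^ Suc m"
    by (rule power_mono[OF key_u2[OF u]]) simp
  also have "\<dots> = exp (N * (u - 1 / u))"
    unfolding N_def by (rule exp_of_nat_mult[symmetric])
  also have "\<dots> = exp (N * u - N / u)" by (simp add: algebra_simps)
  finally have A: "u ^ (2 * m + 2) \<le> exp (N * u - N / u)" .
  have "exp (- (N * u)) * u ^ (2 * m + 2) \<le> exp (- (N * u)) * exp (N * u - N / u)"
    using A by simp
  also have "\<dots> = exp (- (N / u))" by (simp add: exp_add[symmetric])
  finally have B: "exp (- (N * u)) * u ^ (2 * m + 2) \<le> exp (- (N / u))" .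
  have C: "exp (- (N * u)) * (N * u) ^ m * u\<^sup>2 \<le> exp (- (N / u)) * (N / u) ^ m"
  proof -
    have "exp (- (N * u)) * (N * u) ^ m * u\<^sup>2 * u ^ m = (exp (- (N * u)) * u ^ (2 * m + 2)) * N ^ m"
      by (simp add: power_mult_distrib power_add power2_eq_square power_mult mult_ac)
    also have "\<dots> \<le> exp (- (N / u)) * N ^ m"
      using B N by (intro mult_right_mono) auto
    also have "\<dots> = exp (- (N / u)) * (N / u) ^ m * u ^ m"
      using u0 by (simp add: power_divide)
    finally show ?thesis using u0 by (simp add: mult_le_cancel_right)
  qed
  show ?thesis unfolding pp_def N_def[symmetric]
    using C u0 by (simp add: field_simps)
qed

lemma PP_half:
  assumes n: "n \<ge> 1"
  shows "PP n (real n) \<le> 1 / 2"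
proof -
  obtain m where nm: "n = Suc m" using n by (cases n) auto
  define N where "N = real (Suc m)"
  have N: "N > 0" by (simp add: N_def)
  have E: "2 * PP n N \<le> 1 + PP n (N * U)" if U: "U \<ge> 1" for U
  proof -
    have "(\<lambda>u. PP n (N / u) + PP n (N * u)) 1 \<le> (\<lambda>u. PP n (N / u) + PP n (N * u)) U"
    proof (rule DERIV_nonneg_imp_nondecreasing[OF U])
      fix x :: real assume x: "1 \<le> x" "x \<le> U"
      have d1: "DERIV (\<lambda>u. N / u) x :> - N / x\<^sup>2"
        using x by (auto intro!: derivative_eq_intros simp: power2_eq_square field_simps)
      have d2: "DERIV (\<lambda>u. N * u) x :> N"
        by (auto intro!: derivative_eq_intros)
      have "DERIV (\<lambda>u. PP n (N / u) + PP n (N * u)) x :>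
              - pp m (N / x) * (- N / x\<^sup>2) + - pp m (N * x) * N"
        unfolding nm by (intro DERIV_add DERIV_PP_comp d1 d2)
      moreover have "- pp m (N / x) * (- N / x\<^sup>2) + - pp m (N * x) * N \<ge> 0"
      proof -
        have "pp m (N * x) \<le> pp m (N / x) / x\<^sup>2" unfolding N_def by (rule key_pp) (use x in auto)
        then have "pp m (N * x) * N \<le> pp m (N / x) / x\<^sup>2 * N" using N by (intro mult_right_mono) auto
        then show ?thesis by (simp add: field_simps)
      qed
      ultimately show "\<exists>y. DERIV (\<lambda>u. PP n (N / u) + PP n (N * u)) x :> y \<and> y \<ge> 0" by blast
    qed
    moreover have "PP n (N / U) \<le> 1" using U N n by (intro PP_le1) auto
    ultimately show ?thesis by simp
  qed
  show ?thesis
  proof (rule ccontr)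
    assume "\<not> ?thesis"
    then have eps: "2 * PP n N - 1 > 0" using nm N_def by simp
    have "\<forall>\<^sub>F x in at_top. PP n x < 2 * PP n N - 1"
      using order_tendstoD(2)[OF PP_tendsto0 eps] .
    then obtain X where X: "\<And>x. x \<ge> X \<Longrightarrow> PP n x < 2 * PP n N - 1"
      by (auto simp: eventually_at_top_linorder)
    define U where "U = max 1 (X / N)"
    have "N * U \<ge> X"
  proof -
    have "N * (X / N) \<le> N * U" using N by (intro mult_left_mono) (auto simp: U_def)
    then show ?thesis using N by simp
  qed
    then have "PP n (N * U) < 2 * PP n N - 1" by (rule X)
    moreover have "2 * PP n N \<le> 1 + PP n (N * U)" by (rule E) (simp add: U_def)
    ultimately show False by simp
  qed
qed



lemma exp_pade: assumes "0 \<le> x" "x \<le> (1::real)" shows "exp x * (1 - x / 2) \<le> 1 + x / 2"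
proof -
  have "(\<lambda>x. exp x * (1 - x / 2) - 1 - x / 2) x \<le> (\<lambda>x. exp x * (1 - x / 2) - 1 - x / 2) 0"
  proof (rule DERIV_nonpos_imp_nonincreasing[OF assms(1)])
    fix y :: real assume y: "0 \<le> y" "y \<le> x"
    have "DERIV (\<lambda>x. exp x * (1 - x / 2) - 1 - x / 2) y :> exp y * (1 - y / 2) - exp y / 2 - 1 / 2"
      by (auto intro!: derivative_eq_intros simp: algebra_simps)
    moreover have "exp y * (1 - y / 2) - exp y / 2 - 1 / 2 \<le> 0"
    proof -
      have "1 - y \<le> exp (- y)" using exp_ge_add_one_self[of "-y"] by simp
      then have "exp y * (1 - y) \<le> exp y * exp (-y)" by (intro mult_left_mono) auto
      then have "exp y * (1 - y) \<le> 1" by (simp add: exp_minus)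
      then show ?thesis by (simp add: algebra_simps)
    qed
    ultimately show "\<exists>d. DERIV (\<lambda>x. exp x * (1 - x / 2) - 1 - x / 2) y :> d \<and> d \<le> 0" by blast
  qed
  then show ?thesis by simp
qed

lemma pp_Suc: "pp (Suc m) x = pp m x * x / real (Suc m)"
  by (simp add: pp_def field_simps del: of_nat_Suc)

lemma pointwise_A:
  assumes s: "0 \<le> s" "s \<le> 1"
  shows "pp m (real (Suc m) + s) \<le> pp m (real (Suc m) + 1) * exp (2 * (1 - s) / (real (Suc m) + 1))"
proof -
  define N where "N = real (Suc m)"
  have N: "N \<ge> 1" by (simp add: N_def)
  define y where "y = - (1 - s) / (N + 1)"
  have y: "1 + y \<ge> 0" using s N by (simp add: y_def field_simps)
  have Ns: "N + s = (N + 1) * (1 + y)" using N by (simp add: y_def field_simps)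
  have "(1 + y) ^ m \<le> exp y ^ m"
    by (rule power_mono[OF _ y]) (simp add: add.commute exp_ge_add_one_self)
  also have "\<dots> = exp (real m * y)" by (simp add: exp_of_nat_mult)
  finally have P: "(N + s) ^ m \<le> (N + 1) ^ m * exp (real m * y)"
    unfolding Ns power_mult_distrib using N by (intro mult_left_mono) auto
  have "exp (- (N + s)) * (N + s) ^ m \<le> exp (- (N + s)) * ((N + 1) ^ m * exp (real m * y))"
    using P by (intro mult_left_mono) auto
  also have "\<dots> = exp (- (N + 1)) * (N + 1) ^ m * exp (- (N + s) + real m * y + (N + 1))"
    by (simp add: exp_add exp_diff exp_minus field_simps)
  also have "- (N + s) + real m * y + (N + 1) = 2 * (1 - s) / (N + 1)"
    using N unfolding y_def N_def by (simp add: field_simps)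
  finally have "exp (- (N + s)) * (N + s) ^ m \<le> exp (- (N + 1)) * (N + 1) ^ m * exp (2 * (1 - s) / (N + 1))" .
  then show ?thesis unfolding pp_def N_def[symmetric]
    by (simp add: divide_right_mono mult_ac)
qed

lemma lemma_A:
  assumes n: "n \<ge> 1"
  shows "PP n (real n) \<le> PP (Suc n) (real n + 1)"
proof -
  obtain m where nm: "n = Suc m" using n by (cases n) auto
  define N where "N = real (Suc m)"
  have N: "N \<ge> 1" by (simp add: N_def)
  define c where "c = (N + 1) / 2 * pp m (N + 1)"
  have c: "c \<ge> 0" using N by (simp add: c_def pp_nonneg)
  define \<Phi> where "\<Phi> = (\<lambda>s. PP n (N + s) - c * exp (2 * (1 - s) / (N + 1)))"
  have "\<Phi> 0 \<le> \<Phi> 1"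
  proof (rule DERIV_nonneg_imp_nondecreasing[of 0 1 \<Phi>])
    fix x :: real assume x: "0 \<le> x" "x \<le> 1"
    have d1: "DERIV (\<lambda>s. N + s) x :> 1" by (auto intro!: derivative_eq_intros)
    have d2: "DERIV (\<lambda>s. c * exp (2 * (1 - s) / (N + 1))) x :> c * (exp (2 * (1 - x) / (N + 1)) * (- 2 / (N + 1)))"
    proof -
      have i0: "DERIV (\<lambda>s. (2 / (N + 1)) * (1 - s)) x :> (2 / (N + 1)) * (0 - 1)"
        by (intro DERIV_cmult DERIV_diff DERIV_const DERIV_ident)
      have e: "(\<lambda>s. (2 / (N + 1)) * (1 - s)) = (\<lambda>s. 2 * (1 - s) / (N + 1))" by auto
      have i: "DERIV (\<lambda>s. 2 * (1 - s) / (N + 1)) x :> (- 2 / (N + 1))"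
        using i0 unfolding e by simp
      show ?thesis using DERIV_cmult[OF DERIV_chain2[OF DERIV_exp i], of c] by simp
    qed
    have "DERIV \<Phi> x :> - pp m (N + x) * 1 - c * (exp (2 * (1 - x) / (N + 1)) * (- 2 / (N + 1)))"
      unfolding \<Phi>_def nm by (intro DERIV_diff DERIV_PP_comp d1 d2)
    moreover have "- pp m (N + x) * 1 - c * (exp (2 * (1 - x) / (N + 1)) * (- 2 / (N + 1))) \<ge> 0"
    proof -
      have "c * (exp (2 * (1 - x) / (N + 1)) * (- 2 / (N + 1))) = - pp m (N + 1) * exp (2 * (1 - x) / (N + 1))"
        using N by (simp add: c_def field_simps)
      then show ?thesis using pointwise_A[OF x, of m] unfolding N_def by simp
    qed
    ultimately show "\<exists>y. DERIV \<Phi> x :> y \<and> y \<ge> 0" by blast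
  qed simp
  then have D: "PP n N - PP n (N + 1) \<le> c * (exp (2 / (N + 1)) - 1)"
    by (simp add: \<Phi>_def algebra_simps)
  have "exp (2 / (N + 1)) * (1 - (2 / (N + 1)) / 2) \<le> 1 + (2 / (N + 1)) / 2"
    using N by (intro exp_pade) auto
  then have "exp (2 / (N + 1)) * (N / (N + 1)) \<le> (N + 2) / (N + 1)"
    using N by (simp add: field_simps)
  then have "exp (2 / (N + 1)) * (N / (N + 1)) * (N + 1) \<le> (N + 2) / (N + 1) * (N + 1)"
    using N by (intro mult_right_mono) auto
  then have "exp (2 / (N + 1)) * N \<le> N + 2" using N by simp
  then have "exp (2 / (N + 1)) \<le> (N + 2) / N" using N by (simp add: field_simps)
  then have "exp (2 / (N + 1)) - 1 \<le> 2 / N" using N by (simp add: field_simps)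
  then have "c * (exp (2 / (N + 1)) - 1) \<le> c * (2 / N)" using c by (rule mult_left_mono)
  also have "c * (2 / N) = pp n (N + 1)"
    unfolding c_def nm pp_Suc N_def by (simp add: field_simps)
  finally have "PP n N \<le> PP n (N + 1) + pp n (N + 1)" using D by simp
  then show ?thesis unfolding PP_Suc nm N_def by simp
qed



lemma texp_mono: assumes "0 \<le> a" "a \<le> b" "b \<le> (1::real)" shows "a * exp (-a) \<le> b * exp (-b)"
proof (rule DERIV_nonneg_imp_nondecreasing[of a b "\<lambda>s. s * exp (-s)", OF assms(2)])
  fix x :: real assume x: "a \<le> x" "x \<le> b"
  have "DERIV (\<lambda>s. s * exp (-s)) x :> 1 * exp (-x) + (- exp (-x)) * x"
    by (auto intro!: derivative_eq_intros)
  moreover have "1 * exp (-x) + (- exp (-x)) * x = (1 - x) * exp (-x)" by (simp add: algebra_simps)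
  moreover have "(1 - x) * exp (-x) \<ge> 0" using x assms by simp
  ultimately show "\<exists>y. DERIV (\<lambda>s. s * exp (-s)) x :> y \<and> y \<ge> 0" by auto
qed

lemma factor_id:
  fixes m :: nat and t :: real
  defines "N \<equiv> real (Suc m)"
  shows "pp (Suc m) ((N + 1) * t) * (N + 1)
     = pp m (N * t) * N * (((N + 1) / N) ^ Suc (Suc m) * (t * exp (- t)))"
proof -
  have N: "N > 0" by (simp add: N_def)
  have f: "fact (Suc m) = N * fact m" by (simp add: N_def)
  have ex: "exp (- ((N + 1) * t)) = exp (- (N * t)) * exp (- t)"
    by (simp add: exp_add[symmetric] algebra_simps)
  have fm: "fact m > (0::real)" by simp
  have Nm: "N ^ m > 0" using N by simp
  have l: "pp (Suc m) ((N + 1) * t) * (N + 1) = exp (- (N * t)) * exp (- t) * ((N + 1) ^ m * (N + 1) * (N + 1)) * (t ^ m * t) / (N * fact m)"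
    unfolding pp_def f ex power_mult_distrib power_Suc by (simp add: mult_ac)
  have r: "pp m (N * t) * N * (((N + 1) / N) ^ Suc (Suc m) * (t * exp (- t)))
     = exp (- (N * t)) * (N ^ m * t ^ m) / fact m * N * (((N + 1) ^ m * (N + 1) * (N + 1)) / (N ^ m * N * N) * (t * exp (- t)))"
    unfolding pp_def power_mult_distrib power_divide power_Suc by (simp add: mult_ac)
  show ?thesis unfolding l r using N fm Nm by (simp add: field_simps)
qed

lemma H_nonneg:
  assumes n: "n \<ge> 1" and t: "0 \<le> t" "t \<le> 1"
  shows "PP n (real n * t) \<le> PP (Suc n) ((real n + 1) * t)"
proof -
  obtain m where nm: "n = Suc m" using n by (cases n) auto
  define N where "N = real (Suc m)"
  have N: "N \<ge> 1" by (simp add: N_def)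
  define c where "c = ((N + 1) / N) ^ Suc (Suc m)"
  define h where "h = (\<lambda>t. PP (Suc n) ((N + 1) * t) - PP n (N * t))"
  have dh: "DERIV h x :> pp m (N * x) * N * (1 - c * (x * exp (-x)))" for x
  proof -
    have d1: "DERIV (\<lambda>t. (N + 1) * t) x :> N + 1" by (auto intro!: derivative_eq_intros)
    have d2: "DERIV (\<lambda>t. N * t) x :> N" by (auto intro!: derivative_eq_intros)
    have "DERIV h x :> - pp n ((N + 1) * x) * (N + 1) - (- pp m (N * x) * N)"
      unfolding h_def nm by (intro DERIV_diff DERIV_PP_comp d1 d2)
    moreover have "- pp n ((N + 1) * x) * (N + 1) - (- pp m (N * x) * N)
        = pp m (N * x) * N * (1 - c * (x * exp (-x)))"
    proof -
      have fi: "pp n ((N + 1) * x) * (N + 1) = pp m (N * x) * N * (c * (x * exp (-x)))"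
        using factor_id[of m x] unfolding N_def c_def nm by simp
      show ?thesis unfolding minus_mult_left[symmetric] fi by (simp add: algebra_simps)
    qed
    ultimately show ?thesis by simp
  qed
  have h0: "h 0 = 0" using n by (simp add: h_def PP_at0)
  have h1: "h 1 \<ge> 0" using lemma_A[OF n] by (simp add: h_def N_def nm)
  have "h t \<ge> 0"
  proof (cases "c * (t * exp (-t)) \<le> 1")
    case True
    have "h 0 \<le> h t"
    proof (rule DERIV_nonneg_imp_nondecreasing[of 0 t h, OF t(1)])
      fix x assume x: "0 \<le> x" "x \<le> t"
      have "x * exp (-x) \<le> t * exp (-t)" using x t by (intro texp_mono) auto
      then have "c * (x * exp (-x)) \<le> 1" using True by (smt (verit) N c_def mult_left_mono zero_le_divide_iff zero_le_power)
      moreover have "pp m (N * x) * N \<ge> 0" using N x by (simp add: pp_nonneg)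
      ultimately show "\<exists>y. DERIV h x :> y \<and> y \<ge> 0" using dh by (intro exI[of _ "pp m (N * x) * N * (1 - c * (x * exp (-x)))"]) simp
    qed
    then show ?thesis using h0 by simp
  next
    case False
    have "h 1 \<le> h t"
    proof (rule DERIV_nonpos_imp_nonincreasing[of t 1 h, OF t(2)])
      fix x assume x: "t \<le> x" "x \<le> 1"
      have "t * exp (-t) \<le> x * exp (-x)" using x t by (intro texp_mono) auto
      then have "c * (x * exp (-x)) \<ge> 1" using False by (smt (verit) N c_def mult_left_mono zero_le_divide_iff zero_le_power)
      moreover have "pp m (N * x) * N \<ge> 0" using N x t by (simp add: pp_nonneg)
      ultimately show "\<exists>y. DERIV h x :> y \<and> y \<le> 0" using dh
        by (intro exI[of _ "pp m (N * x) * N * (1 - c * (x * exp (-x)))"]) (simp add: mult_nonneg_nonpos)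
    qed
    then show ?thesis using h1 by simp
  qed
  then show ?thesis by (simp add: h_def N_def nm)
qed

lemma lam_step:
  assumes b: "1 / 2 \<le> \<beta>" "\<beta> < 1"
  shows "Qinv (Suc k) \<beta> / real (Suc k) \<le> Qinv (Suc (Suc k)) \<beta> / real (Suc (Suc k))"
proof -
  define n where "n = Suc k"
  define N where "N = real n"
  have N: "N \<ge> 1" by (simp add: N_def n_def)
  have n1: "n \<ge> 1" by (simp add: n_def)
  define L where "L = Qinv n \<beta>"
  define L' where "L' = Qinv (Suc n) \<beta>"
  have L: "L > 0" "PP n L = \<beta>" using Qinv_prop[OF n1, of \<beta>] b by (auto simp: L_def)
  have L': "L' > 0" "PP (Suc n) L' = \<beta>" using Qinv_prop[of "Suc n" \<beta>] b by (auto simp: L'_def)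
  have LN: "L \<le> N"
  proof (rule ccontr)
    assume "\<not> L \<le> N"
    then have "PP n L < PP n N" using N by (intro PP_strict_decr[OF n1]) auto
    then show False using PP_half[OF n1] L b by (simp add: N_def)
  qed
  define t where "t = L / N"
  have t: "0 \<le> t" "t \<le> 1" using L LN N by (auto simp: t_def)
  have "PP n (N * t) \<le> PP (Suc n) ((N + 1) * t)" using H_nonneg[OF n1 t] by (simp add: N_def)
  moreover have "N * t = L" using N by (simp add: t_def)
  ultimately have A: "\<beta> \<le> PP (Suc n) ((N + 1) * t)" using L by simp
  have "(N + 1) * t \<le> L'"
  proof (rule ccontr)
    assume "\<not> (N + 1) * t \<le> L'"
    then have "PP (Suc n) ((N + 1) * t) < PP (Suc n) L'" using L' by (intro PP_strict_decr) auto
    then show False using A L' by simp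
  qed
  then have "L / N \<le> L' / (N + 1)" using N by (simp add: t_def field_simps)
  then show ?thesis by (simp add: L_def L'_def N_def n_def)
qed

lemma lam_mono:
  assumes b: "1 / 2 \<le> \<beta>" "\<beta> < 1" and k: "k0 \<le> k"
  shows "Qinv (k0 + 1) \<beta> / real (k0 + 1) \<le> Qinv (k + 1) \<beta> / real (k + 1)"
  using lift_Suc_mono_le[of "\<lambda>k. Qinv (k + 1) \<beta> / real (k + 1)", OF _ k] lam_step[OF b] by simp



definition qq :: "real \<Rightarrow> (real \<times> real) list \<Rightarrow> real" where
  "qq a xs = measure_pmf.prob (sum_pmf xs) {y. a + y > 1}"

definition mu :: "(real \<times> real) list \<Rightarrow> real" where
  "mu xs = sum_list (map (\<lambda>x. fst x * snd x) xs)"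

lemma sum_pmf_Cons_bind:
  "sum_pmf ((p, s) # xs) = bind_pmf (bernoulli_pmf p) (\<lambda>b. map_pmf (\<lambda>r. (if b then s else 0) + r) (sum_pmf xs))"
  unfolding sum_pmf.simps item_pmf_def fst_conv snd_conv
  by (simp add: pair_pmf_def map_pmf_def bind_assoc_pmf bind_return_pmf bind_return_pmf')

lemma qq_Nil: "qq a [] = (if a > 1 then 1 else 0)"
  by (simp add: qq_def)

lemma qq_Cons:
  assumes p: "0 \<le> p" "p \<le> 1"
  shows "qq a ((p, s) # xs) = p * qq (a + s) xs + (1 - p) * qq a xs"
proof -
  define F where "F = (\<lambda>b. map_pmf (\<lambda>r. (if b then s else 0) + r) (sum_pmf xs))"
  have T: "measure_pmf.prob (F True) {y. a + y > 1} = qq (a + s) xs"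
    unfolding F_def qq_def by (simp add: vimage_def add.assoc)
  have Fa: "measure_pmf.prob (F False) {y. a + y > 1} = qq a xs"
    unfolding F_def qq_def by (simp add: vimage_def)
  have "emeasure (measure_pmf (bind_pmf (bernoulli_pmf p) F)) {y. a + y > 1}
      = emeasure (F True) {y. a + y > 1} * p + emeasure (F False) {y. a + y > 1} * (1 - p)"
    using p by simp
  also have "\<dots> = ennreal (qq (a + s) xs * p + qq a xs * (1 - p))"
    using p by (simp add: measure_pmf.emeasure_eq_measure T Fa ennreal_mult' ennreal_plus qq_def)
  finally have E: "ennreal (qq a ((p, s) # xs)) = ennreal (qq (a + s) xs * p + qq a xs * (1 - p))"
    unfolding qq_def sum_pmf_Cons_bind F_def[symmetric]
    by (simp add: measure_pmf.emeasure_eq_measure)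
  have "qq a ((p, s) # xs) = qq (a + s) xs * p + qq a xs * (1 - p)"
    using E p by (subst (asm) ennreal_inj) (auto simp: qq_def)
  then show ?thesis by (simp add: algebra_simps)
qed

lemma qq_nonneg: "qq a xs \<ge> 0" by (simp add: qq_def)

lemma qq_gt1:
  assumes "\<forall>x\<in>set xs. 0 \<le> fst x \<and> fst x \<le> 1 \<and> 0 \<le> snd x" "b > 1"
  shows "qq b xs = 1"
  using assms
proof (induction xs arbitrary: b)
  case Nil then show ?case by (simp add: qq_Nil)
next
  case (Cons x xs)
  obtain p s where x: "x = (p, s)" by (cases x)
  have "qq (b + s) xs = 1" "qq b xs = 1" using Cons x by auto
  then show ?case using Cons x by (simp add: qq_Cons)
qed

lemma mu_nonneg: "\<forall>x\<in>set xs. 0 \<le> fst x \<and> 0 \<le> snd x \<Longrightarrow> mu xs \<ge> 0"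
  unfolding mu_def by (induction xs) auto

lemma mean_bound_gen:
  assumes "\<forall>x\<in>set xs. 0 \<le> fst x \<and> fst x \<le> 1 \<and> 0 \<le> snd x \<and> snd x \<le> 1" "a \<le> 1"
  shows "a + mu xs \<le> 1 + qq a xs * (1 + mu xs)"
  using assms
proof (induction xs arbitrary: a)
  case Nil then show ?case by (simp add: qq_Nil mu_def)
next
  case (Cons x ys)
  obtain p s where x: "x = (p, s)" by (cases x)
  have p: "0 \<le> p" "p \<le> 1" and s: "0 \<le> s" "s \<le> 1" using Cons.prems x by auto
  have ys: "\<forall>x\<in>set ys. 0 \<le> fst x \<and> fst x \<le> 1 \<and> 0 \<le> snd x \<and> snd x \<le> 1" using Cons.prems by auto
  have mu0: "mu ys \<ge> 0" using ys by (intro mu_nonneg) auto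
  have X1: "a + s + mu ys \<le> 1 + qq (a + s) ys * (1 + mu ys)"
  proof (cases "a + s \<le> 1")
    case True then show ?thesis using Cons.IH[OF ys True] by simp
  next
    case False
    then have "qq (a + s) ys = 1" using ys by (intro qq_gt1) auto
    then show ?thesis using Cons.prems s by simp
  qed
  have X0: "a + mu ys \<le> 1 + qq a ys * (1 + mu ys)" using Cons.IH[OF ys Cons.prems(2)] .
  have "p * (a + s + mu ys) \<le> p * (1 + qq (a + s) ys * (1 + mu ys))"
    using X1 p by (intro mult_left_mono) auto
  moreover have "(1 - p) * (a + mu ys) \<le> (1 - p) * (1 + qq a ys * (1 + mu ys))"
    using X0 p by (intro mult_left_mono) auto
  ultimately have "p * (a + s + mu ys) + (1 - p) * (a + mu ys)
      \<le> p * (1 + qq (a + s) ys * (1 + mu ys)) + (1 - p) * (1 + qq a ys * (1 + mu ys))" by linarith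
  then have "a + p * s + mu ys \<le> 1 + qq a (x # ys) * (1 + mu ys)"
    using p by (simp add: qq_Cons x algebra_simps)
  moreover have "qq a (x # ys) * (1 + mu ys) \<le> qq a (x # ys) * (1 + mu ys + p * s)"
    using qq_nonneg p s by (intro mult_left_mono) auto
  ultimately show ?case by (simp add: mu_def x algebra_simps)
qed

lemma mean_bound:
  assumes "\<forall>x\<in>set xs. 0 \<le> fst x \<and> fst x \<le> 1 \<and> 0 \<le> snd x \<and> snd x \<le> 1"
    and "measure_pmf.prob (sum_pmf xs) {x. x > 1} \<le> \<alpha>" "\<alpha> < 1"
  shows "mu xs \<le> (1 + \<alpha>) / (1 - \<alpha>)"
proof -
  have q: "qq 0 xs \<le> \<alpha>" using assms(2) by (simp add: qq_def)
  have m: "mu xs \<ge> 0" using assms(1) by (intro mu_nonneg) auto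
  have "mu xs \<le> 1 + qq 0 xs * (1 + mu xs)" using mean_bound_gen[OF assms(1), of 0] by simp
  also have "\<dots> \<le> 1 + \<alpha> * (1 + mu xs)" using q m by (intro add_left_mono mult_right_mono) auto
  finally have "mu xs * (1 - \<alpha>) \<le> 1 + \<alpha>" by (simp add: algebra_simps)
  then show ?thesis using assms(3) by (simp add: field_simps)
qed



lemma anyfit_img:
  assumes "anyfit vs g" "j \<le> length vs"
  shows "g ` {..<j} = {..<card (g ` {..<j})}"
  using assms(2)
proof (induction j)
  case 0 then show ?case by simp
next
  case (Suc j)
  obtain c where c: "c = card (g ` {..<j})" by simp
  have IH: "g ` {..<j} = {..<c}" using Suc c by simp
  have le: "g j \<le> c" using assms(1) Suc.prems c unfolding anyfit_def by auto
  have e: "g ` {..<Suc j} = insert (g j) (g ` {..<j})" by (simp add: lessThan_Suc)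
  show ?case
  proof (cases "g j < c")
    case True
    then have "g ` {..<Suc j} = {..<c}" unfolding e IH by auto
    then show ?thesis by simp
  next
    case False
    then have "g j = c" using le by simp
    then have "g ` {..<Suc j} = {..<Suc c}" unfolding e IH by (auto simp: lessThan_Suc)
    then show ?thesis by simp
  qed
qed

lemma load_mono': 
  assumes "\<forall>v\<in>set vs. v \<ge> 0" "j \<le> length vs"
  shows "load vs g j b \<le> load vs g (length vs) b"
  unfolding load_def
  using assms by (intro sum_mono2) auto

lemma load_nonneg:
  assumes "\<forall>v\<in>set vs. v \<ge> 0"
  shows "load vs g (length vs) b \<ge> 0"
  unfolding load_def using assms
  by (intro sum_nonneg) auto

lemma load_item:
  assumes "\<forall>v\<in>set vs. v \<ge> 0" "j < length vs"
  shows "vs ! j \<le> load vs g (length vs) (g j)"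
proof -
  have "vs ! j = (\<Sum>i\<in>{j}. vs ! i)" by simp
  also have "\<dots> \<le> load vs g (length vs) (g j)"
    unfolding load_def using assms by (intro sum_mono2) auto
  finally show ?thesis .
qed

lemma anyfit_bound:
  assumes af: "anyfit vs g" and nn: "\<forall>v\<in>set vs. v \<ge> 0"
  shows "real (num_bins (length vs) g) \<le> 2 * sum_list vs + 1"
proof -
  define n where "n = length vs"
  define N where "N = num_bins n g"
  define L where "L = (\<lambda>b. load vs g n b)"
  have img: "g ` {..<n} = {..<N}" using anyfit_img[OF af, of n] by (simp add: N_def num_bins_def n_def)
  have Lnn: "L b \<ge> 0" for b using load_nonneg[OF nn] by (simp add: L_def n_def)
  have two: False if b: "b1 < b2" "b2 < N" "L b1 \<le> 1/2" "L b2 \<le> 1/2" for b1 b2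
  proof -
    have "b2 \<in> g ` {..<n}" using img b by auto
    then have ex: "\<exists>j. j < n \<and> g j = b2" by auto
    define j where "j = (LEAST j. j < n \<and> g j = b2)"
    have j: "j < n" "g j = b2" using LeastI_ex[OF ex] by (auto simp: j_def)
    have notin: "b2 \<notin> g ` {..<j}"
    proof
      assume "b2 \<in> g ` {..<j}"
      then obtain i where "i < j" "g i = b2" by auto
      moreover then have "i < n" using j by simp
      ultimately show False using not_less_Least[of i "\<lambda>j. j < n \<and> g j = b2"] by (auto simp: j_def)
    qed
    let ?c = "card (g ` {..<j})"
    have imgj: "g ` {..<j} = {..<?c}" using anyfit_img[OF af, of j] j by (simp add: n_def)
    have "?c \<le> b2" using notin imgj by (metis lessThan_iff not_le)
    moreover have "g j \<le> ?c" using af j unfolding anyfit_def n_def by auto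
    ultimately have new: "g j = ?c" using j by simp
    then have "load vs g j b1 + vs ! j > 1" using af j b unfolding anyfit_def n_def by auto
    moreover have "load vs g j b1 \<le> L b1" unfolding L_def n_def
      using j by (intro load_mono' nn) (auto simp: n_def)
    moreover have "vs ! j \<le> L b2" unfolding L_def n_def using load_item[OF nn, of j g] j by (simp add: n_def)
    ultimately show False using b by simp
  qed
  define S where "S = {b. b < N \<and> L b \<le> 1/2}"
  have cS: "card S \<le> 1"
  proof -
    have fS: "finite S" by (simp add: S_def)
    have "\<forall>x\<in>S. \<forall>y\<in>S. x = y"
    proof (intro ballI)
      fix x y assume "x \<in> S" "y \<in> S"
      then show "x = y" using two[of x y] two[of y x] by (cases x y rule: linorder_cases) (auto simp: S_def)
    qed
    then show ?thesis using card_le_Suc0_iff_eq[OF fS] by simp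
  qed
  have sumL: "(\<Sum>b<N. L b) = sum_list vs"
  proof -
    have "(\<Sum>b<N. L b) = (\<Sum>b\<in>g ` {..<n}. \<Sum>i\<in>{i\<in>{..<n}. g i = b}. vs ! i)"
      unfolding img L_def load_def by (intro sum.cong) auto
    also have "\<dots> = (\<Sum>i<n. vs ! i)" by (rule sum.image_gen[symmetric]) simp
    also have "\<dots> = sum_list vs" by (simp add: sum_list_sum_nth n_def atLeast0LessThan)
    finally show ?thesis .
  qed
  have "(\<Sum>b\<in>{..<N} - S. L b) \<le> (\<Sum>b<N. L b)"
    using Lnn by (intro sum_mono2) auto
  moreover have "(\<Sum>b\<in>{..<N} - S. (1/2::real)) \<le> (\<Sum>b\<in>{..<N} - S. L b)"
    by (intro sum_mono) (auto simp: S_def)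
  moreover have "card ({..<N} - S) \<ge> N - 1"
  proof -
    have "card ({..<N} - S) = N - card S" by (subst card_Diff_subset) (auto simp: S_def)
    then show ?thesis using cS by simp
  qed
  ultimately have "real (card ({..<N} - S)) / 2 \<le> sum_list vs" and cc: "card ({..<N} - S) \<ge> N - 1"
    using sumL by auto
  moreover have "real (N - 1) \<le> real (card ({..<N} - S))" using cc by (rule of_nat_mono)
  ultimately have "real (N - 1) / 2 \<le> sum_list vs" by linarith
  then show ?thesis by (simp add: N_def n_def)
qed

lemma sum_classes:
  assumes "finite C" "\<forall>x\<in>set xs. cls x \<in> C"
  shows "(\<Sum>c\<in>C. sum_list (map v (filter (\<lambda>x. cls x = c) xs))) = sum_list (map v xs)"
  using assms(2)
proof (induction xs)
  case Nil then show ?case by simp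
next
  case (Cons x xs)
  have "(\<Sum>c\<in>C. sum_list (map v (filter (\<lambda>y. cls y = c) (x # xs))))
      = (\<Sum>c\<in>C. (if cls x = c then v x else 0) + sum_list (map v (filter (\<lambda>y. cls y = c) xs)))"
    by (intro sum.cong) auto
  also have "\<dots> = v x + sum_list (map v xs)"
    using Cons assms(1) by (simp add: sum.distrib)
  finally show ?case by simp
qed

lemma sum_bins:
  "sum_list (map w items) = (\<Sum>b\<in>f ` {..<length items}. sum_list (map w (bin_items items f b)))"
proof -
  define n where "n = length items"
  have B: "sum_list (map w (bin_items items f b)) = (\<Sum>i\<in>{i\<in>{..<n}. f i = b}. w (items ! i))" for b
  proof -
    have "sum_list (map w (bin_items items f b)) = sum_list (map (\<lambda>i. w (items ! i)) (filter (\<lambda>i. f i = b) [0..<n]))"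
      by (simp add: bin_items_def n_def o_def)
    also have "\<dots> = (\<Sum>i\<in>set (filter (\<lambda>i. f i = b) [0..<n]). w (items ! i))"
      by (rule sum_list_distinct_conv_sum_set) simp
    also have "set (filter (\<lambda>i. f i = b) [0..<n]) = {i\<in>{..<n}. f i = b}" by auto
    finally show ?thesis .
  qed
  have "sum_list (map w items) = (\<Sum>i<n. w (items ! i))"
    by (simp add: sum_list_sum_nth n_def atLeast0LessThan)
  also have "\<dots> = (\<Sum>b\<in>f ` {..<n}. \<Sum>i\<in>{i\<in>{..<n}. f i = b}. w (items ! i))"
    by (rule sum.image_gen) simp
  finally show ?thesis unfolding B n_def .
qed

lemma filter_eq_upt: "filter (\<lambda>i. i = b) [0..<n] = (if b < n then [b] else [])"
  by (induction n) auto

lemma OPT_exists: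
  assumes "\<forall>x \<in> set items. 0 \<le> fst x \<and> fst x \<le> 1 \<and> 0 \<le> snd x \<and> snd x \<le> 1" "0 \<le> \<alpha>"
  shows "\<exists>f. viable \<alpha> items f \<and> num_bins (length items) f = OPT \<alpha> items"
proof -
  have "viable \<alpha> items id"
    unfolding viable_def
  proof
    fix b
    have "qq 0 (bin_items items id b) = 0"
    proof (cases "b < length items")
      case True
      obtain p s where x: "items ! b = (p, s)" by (cases "items ! b")
      have "items ! b \<in> set items" using True by simp
      then have "0 \<le> p" "p \<le> 1" "s \<le> 1" using assms x by auto
      then show ?thesis using True by (simp add: bin_items_def filter_eq_upt x qq_Cons qq_Nil)
    next
      case False then show ?thesis by (simp add: bin_items_def filter_eq_upt qq_Nil)
    qed
    then show "measure_pmf.prob (sum_pmf (bin_items items id b)) {x. 1 < x} \<le> \<alpha>"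
      using assms by (simp add: qq_def)
  qed
  then have "\<exists>m f. viable \<alpha> items f \<and> num_bins (length items) f = m" by blast
  then show ?thesis unfolding OPT_def by (rule LeastI_ex)
qed



lemma ln_ineq: assumes "0 \<le> p" "p < (1::real)" shows "(1 - p) * ln (1 / (1 - p)) \<le> p"
proof -
  have "ln (1 / (1 - p)) \<le> 1 / (1 - p) - 1" using assms by (intro ln_le_minus_one) auto
  then have "(1 - p) * ln (1 / (1 - p)) \<le> (1 - p) * (1 / (1 - p) - 1)"
    using assms by (intro mult_left_mono) auto
  also have "\<dots> = p" using assms by (simp add: field_simps)
  finally show ?thesis .
qed

lemma mu0_pos: assumes "0 < \<alpha>" "0 < smin" shows "mu0 \<alpha> smin > 0"
proof -
  have "smin ^ 2 + 4 * \<alpha> * smin < (2 * \<alpha> + smin) ^ 2" using assms by (simp add: power2_eq_square algebra_simps)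
  then have "sqrt (smin ^ 2 + 4 * \<alpha> * smin) < sqrt ((2 * \<alpha> + smin) ^ 2)" by (intro real_sqrt_less_mono)
  also have "\<dots> = 2 * \<alpha> + smin" using assms by simp
  finally show ?thesis using assms unfolding mu0_def by (simp add: field_simps)
qed

lemma floor_lt_ceil: assumes "(a::real) < b" shows "\<lfloor>a\<rfloor> \<le> \<lceil>b\<rceil> - 1"
proof -
  have "real_of_int \<lfloor>a\<rfloor> < real_of_int \<lceil>b\<rceil>" using assms
    by (meson le_of_int_ceiling of_int_floor_le order_le_less_trans order_less_le_trans)
  then show ?thesis by linarith
qed

theorem theorem1:
  fixes \<alpha> smin smax pmax :: real and items :: "(real \<times> real) list"
    and G :: "rclass \<Rightarrow> nat \<Rightarrow> nat"
  assumes "0 < \<alpha>" "\<alpha> \<le> 1 / 2"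
    and "0 < smin" "smin < smax" "smax \<le> 1"
    and "0 < pmax" "pmax < 1"
    and "pmax * smin \<le> mu0 \<alpha> smin"
    and "ln (1 / (1 - pmax)) \<le> lam \<alpha> (kmin smax)"
    and "\<forall>x \<in> set items. 0 < fst x \<and> fst x \<le> 1 \<and> 0 < snd x \<and> snd x \<le> smax"
    and "rpap_run \<alpha> pmax smin smax items G"
  shows "real (rpap_bins \<alpha> pmax smin smax items G)
    \<le> (1 + \<alpha>) / ((1 - \<alpha>) * ((1 / 2) * min pmax (min (mu0 \<alpha> smin)
            ((1 - pmax) * (Qinv (kmin smax + 1) (1 - \<alpha>) / real (kmin smax + 1))))))
        * real (OPT \<alpha> items)
      + real (kmax smin) - real (kmin smax) + 3"
proof -
  note a = assms
  define m where "m = min pmax (min (mu0 \<alpha> smin)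
            ((1 - pmax) * (Qinv (kmin smax + 1) (1 - \<alpha>) / real (kmin smax + 1))))"
  define K where "K = (1 + \<alpha>) / (1 - \<alpha>)"
  define rv where "rv = rvalue \<alpha> pmax smin"
  define cl where "cl = rclass_of pmax smin"
  define C where "C = rclasses smin smax"
  have b: "1 / 2 \<le> 1 - \<alpha>" "1 - \<alpha> < 1" "0 < 1 - \<alpha>" using a by auto
  have lampos: "lam \<alpha> k > 0" for k
    unfolding lam_def using Qinv_prop[of "k + 1" "1 - \<alpha>"] b by auto
  have mu0p: "mu0 \<alpha> smin > 0" using mu0_pos a by auto
  have m0: "m > 0" unfolding m_def using a mu0p lampos[of "kmin smax"] by (auto simp: lam_def)
  have kminmax: "kmin smax \<le> kmax smin"
    unfolding kmin_def kmax_def using floor_lt_ceil[of "1/smax" "1/smin"] a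
    by (simp add: frac_less2 nat_mono)
  have item: "rv x \<ge> 0 \<and> m * rv x \<le> fst x * snd x \<and> cl x \<in> C" if x: "x \<in> set items" for x
  proof -
    obtain p s where xps: "x = (p, s)" by (cases x)
    have p: "0 < p" "p \<le> 1" and s: "0 < s" "s \<le> smax" using a(10) x xps by auto
    show ?thesis
    proof (cases "p > pmax")
      case True
      then have "cl x = Confident" "rv x = s" unfolding cl_def rv_def rvalue_def rclass_of_def xps by auto
      moreover have "m * s \<le> p * s"
      proof -
        have "m \<le> pmax" unfolding m_def by simp
        then show ?thesis using True s by (intro mult_right_mono) auto
      qed
      ultimately show ?thesis using s xps by (simp add: C_def rclasses_def)
    next
      case False
      note F = False
      show ?thesis
      proof (cases "s \<le> smin")
        case True
        then have "cl x = Minor" "rv x = p * s / mu0 \<alpha> smin"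
          unfolding cl_def rv_def rvalue_def rclass_of_def xps using F by auto
        moreover have "m * (p * s / mu0 \<alpha> smin) \<le> p * s"
        proof -
          have "m * (p * s / mu0 \<alpha> smin) \<le> mu0 \<alpha> smin * (p * s / mu0 \<alpha> smin)"
            using p s mu0p by (intro mult_right_mono) (auto simp: m_def)
          then show ?thesis using mu0p by simp
        qed
        ultimately show ?thesis using p s mu0p xps by (simp add: C_def rclasses_def)
      next
        case False
        define k where "k = nat \<lfloor>1 / s\<rfloor>"
        have clx: "cl x = Regular k" "rv x = ln (1 / (1 - p)) / lam \<alpha> k"
          unfolding cl_def rv_def rvalue_def rclass_of_def xps k_def using F False by auto
        have kmk: "kmin smax \<le> k" unfolding kmin_def k_def using s
          by (intro nat_mono floor_mono) (simp add: frac_le)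
        have kkm: "k \<le> kmax smin" unfolding kmax_def k_def using floor_lt_ceil[of "1/s" "1/smin"] False a(3)
          by (simp add: frac_less2 nat_mono)
        have sk: "1 / real (k + 1) \<le> s"
        proof -
          have fl: "\<lfloor>1 / s\<rfloor> \<ge> 0" using s by simp
          have "real k = of_int \<lfloor>1/s\<rfloor>" using fl by (simp add: k_def)
          then have "1 / s < real k + 1" by linarith
          then have "1 < s * (real k + 1)" using s by (simp add: field_simps)
          then show ?thesis using s by (simp add: field_simps)
        qed
        have pl: "p < 1" using F a(7) by simp
        define Ln where "Ln = ln (1 / (1 - p))"
        have Ln0: "Ln \<ge> 0" unfolding Ln_def using p pl by simp
        have Lnp: "(1 - p) * Ln \<le> p" unfolding Ln_def using ln_ineq p pl by simp
        have lm: "Qinv (kmin smax + 1) (1 - \<alpha>) / real (kmin smax + 1) \<le> lam \<alpha> k / real (k + 1)"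
          unfolding lam_def using lam_mono[OF b(1,2) kmk] .
        have "m \<le> (1 - pmax) * (lam \<alpha> k / real (k + 1))"
          unfolding m_def using lm a(7) by (smt (verit) mult_left_mono)
        then have "m * Ln / lam \<alpha> k \<le> (1 - pmax) * (lam \<alpha> k / real (k + 1)) * Ln / lam \<alpha> k"
          using Ln0 lampos[of k] by (intro divide_right_mono mult_right_mono) auto
        also have "\<dots> = (1 - pmax) * Ln / real (k + 1)" using lampos[of k] by simp
        also have "\<dots> \<le> (1 - p) * Ln / real (k + 1)"
          using F Ln0 by (intro divide_right_mono mult_right_mono) auto
        also have "\<dots> \<le> p / real (k + 1)" using Lnp by (intro divide_right_mono) auto
        also have "\<dots> \<le> p * s" using sk p by (simp add: mult_left_mono[of "1 / real (k + 1)" s p, simplified])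
        finally have "m * rv x \<le> p * s" using clx by (simp add: Ln_def)
        moreover have "rv x \<ge> 0" using clx Ln0 lampos[of k] by (simp add: Ln_def)
        moreover have "cl x \<in> C" using clx kmk kkm by (auto simp: C_def rclasses_def)
        ultimately show ?thesis using xps by simp
      qed
    qed
  qed
  define ri where "ri = routine_input \<alpha> pmax smin items"
  have finC: "finite C" by (simp add: C_def rclasses_def)
  have M: "real (rpap_bins \<alpha> pmax smin smax items G) \<le> (\<Sum>c\<in>C. 2 * sum_list (ri c) + 1)"
    unfolding rpap_bins_def C_def[symmetric] ri_def[symmetric] of_nat_sum
  proof (rule sum_mono)
    fix c assume c: "c \<in> C"
    have "anyfit (ri c) (G c)" using a(11) c unfolding rpap_run_def C_def ri_def by auto
    moreover have "\<forall>v\<in>set (ri c). v \<ge> 0" using item unfolding ri_def routine_input_def rv_def by auto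
    ultimately show "real (num_bins (length (ri c)) (G c)) \<le> 2 * sum_list (ri c) + 1"
      by (rule anyfit_bound)
  qed
  have V: "(\<Sum>c\<in>C. sum_list (ri c)) = sum_list (map rv items)"
    unfolding ri_def routine_input_def rv_def[symmetric] cl_def[symmetric]
    by (rule sum_classes[OF finC]) (use item in auto)
  have cardC: "real (card C) \<le> real (kmax smin) - real (kmin smax) + 3"
  proof -
    have "card C \<le> card {Confident, Minor} + card (Regular ` {kmin smax..kmax smin})"
      unfolding C_def rclasses_def by (rule card_Un_le)
    also have "\<dots> \<le> 2 + card {kmin smax..kmax smin}" using card_image_le[of "{kmin smax..kmax smin}" Regular] by simp
    finally have "card C \<le> 2 + (kmax smin + 1 - kmin smax)" by simp
    then have "real (card C) \<le> real (2 + (kmax smin + 1 - kmin smax))" by (rule of_nat_mono)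
    then show ?thesis using kminmax by (simp add: of_nat_diff)
  qed
  have Msum: "real (rpap_bins \<alpha> pmax smin smax items G) \<le> 2 * sum_list (map rv items) + real (kmax smin) - real (kmin smax) + 3"
  proof -
    have "(\<Sum>c\<in>C. 2 * sum_list (ri c) + 1) = 2 * (\<Sum>c\<in>C. sum_list (ri c)) + real (card C)"
      by (simp add: sum.distrib sum_distrib_left)
    then show ?thesis using M V cardC by linarith
  qed
  have itemsb: "\<forall>x \<in> set items. 0 \<le> fst x \<and> fst x \<le> 1 \<and> 0 \<le> snd x \<and> snd x \<le> 1"
    using a(10) a(5) by force
  obtain f where f: "viable \<alpha> items f" "num_bins (length items) f = OPT \<alpha> items"
    using OPT_exists[OF itemsb, of \<alpha>] a(1) by (meson less_imp_le)
  have muB: "mu items \<le> real (OPT \<alpha> items) * K"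
  proof -
    have "mu items = (\<Sum>b\<in>f ` {..<length items}. mu (bin_items items f b))"
      unfolding mu_def by (rule sum_bins)
    also have "\<dots> \<le> (\<Sum>b\<in>f ` {..<length items}. K)"
    proof (rule sum_mono)
      fix b
      have sub: "set (bin_items items f b) \<subseteq> set items" by (auto simp: bin_items_def)
      show "mu (bin_items items f b) \<le> K" unfolding K_def
        using mean_bound[of "bin_items items f b" \<alpha>] sub itemsb f(1) a(2) unfolding viable_def by auto
    qed
    also have "\<dots> = real (OPT \<alpha> items) * K" using f(2) by (simp add: num_bins_def)
    finally show ?thesis .
  qed
  have mV: "m * sum_list (map rv items) \<le> mu items"
  proof -
    have "m * sum_list (map rv items) = sum_list (map (\<lambda>x. m * rv x) items)"
      by (simp add: sum_list_const_mult)
    also have "\<dots> \<le> mu items" unfolding mu_def using item by (intro sum_list_mono) auto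
    finally show ?thesis .
  qed
  have "2 * sum_list (map rv items) \<le> (1 + \<alpha>) / ((1 - \<alpha>) * ((1 / 2) * m)) * real (OPT \<alpha> items)"
  proof -
    have "m * sum_list (map rv items) \<le> real (OPT \<alpha> items) * K" using mV muB by linarith
    then have "sum_list (map rv items) \<le> real (OPT \<alpha> items) * K / m" using m0 by (simp add: field_simps)
    also have "\<dots> = (1 + \<alpha>) / ((1 - \<alpha>) * ((1 / 2) * m)) * real (OPT \<alpha> items) / 2"
      unfolding K_def using m0 b by (simp add: field_simps)
    finally have X: "sum_list (map rv items) \<le> (1 + \<alpha>) / ((1 - \<alpha>) * ((1 / 2) * m)) * real (OPT \<alpha> items) / 2" .
    show ?thesis using mult_left_mono[OF X, of 2] by simp
  qed
  then show ?thesis using Msum unfolding m_def by linarith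
qed

end
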